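(* Let $G$ be a finitely generated, torsion-free, $2$-step nilpotent group with Malcev basis $(A;C)=(a_1,\dots,a_n;c_1,\dots,c_m)$, $n\ge2$, $m\ge1$, and let $\lambda_t^{ij}$, $\alpha_i$, $\gamma_t$, $c(x)$ and $M_\ell$ be as in the context. Suppose $\mathrm{rank}(M_\ell)=n-1$ for some $\ell\in\{1,\dots,n\}$. Then for $x\in G$, $[a_\ell,x]=1$ if and only if $x=a_\ell^{\alpha_\ell(x)}c(x)$. If, additionally, $\lambda_t^{\ell k}\neq0$ for some $t$ and some $k\neq\ell$, then $Z(G)=\langle C\rangle$ and $a_\ell$ is c-small.
   Context: Commutators: $[g,h]=g^{-1}h^{-1}gh$. A Malcev basis is a pair $(A;C)$ with $C$ a basis of a free abelian subgroup with $G'\le\langle C\rangle\le Z(G)$ and $A$ such that $G/\langle C\rangle$ is free abelian with basis $\{a_i\langle C\rangle\}$. Every $x\in G$ is then uniquely $x=\prod_{i=1}^n a_i^{\alpha_i(x)}c(x)$ with $c(x)=\prod_{j=1}^m c_j^{\gamma_j(x)}$, $\alpha_i(x),\gamma_j(x)\in\mathbb{Z}$. Define integers $\lambda_t^{ij}$ ($1\le i,j\le n$) by $[a_i,a_j]=\prod_{t=1}^m c_t^{\lambda_t^{ij}}$ (so $\lambda_t^{ij}=-\lambda_t^{ji}$, $\lambda_t^{ii}=0$). $M_\ell$ is the $m\times(n-1)$ integer matrix whose $t$-th row is $(-\lambda_t^{1\ell},\dots,-\lambda_t^{\ell-1,\ell},\lambda_t^{\ell,\ell+1},\dots,\lambda_t^{\ell,n})$;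 its rank is its maximal number of linearly independent rows. An element $g$ is c-small if its centralizer equals $\{g^tz\mid t\in\mathbb{Z},z\in Z(G)\}$. *)

theory Defs
  imports "HOL-Algebra.Algebra"
begin

definition comm :: "('g, 'b) monoid_scheme \<Rightarrow> 'g \<Rightarrow> 'g \<Rightarrow> 'g" where
  "comm G g h = inv\<^bsub>G\<^esub> g \<otimes>\<^bsub>G\<^esub> inv\<^bsub>G\<^esub> h \<otimes>\<^bsub>G\<^esub> g \<otimes>\<^bsub>G\<^esub> h"

definition grp_center :: "('g, 'b) monoid_scheme \<Rightarrow> 'g set" where
  "grp_center G = {z \<in> carrier G. \<forall>y \<in> carrier G. z \<otimes>\<^bsub>G\<^esub> y = y \<otimes>\<^bsub>G\<^esub> z}"

definition grp_centralizer :: "('g, 'b) monoid_scheme \<Rightarrow> 'g \<Rightarrow> 'g set" where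
  "grp_centralizer G g = {y \<in> carrier G. g \<otimes>\<^bsub>G\<^esub> y = y \<otimes>\<^bsub>G\<^esub> g}"

definition finitely_generated :: "('g, 'b) monoid_scheme \<Rightarrow> bool" where
  "finitely_generated G \<longleftrightarrow> (\<exists>S. finite S \<and> S \<subseteq> carrier G \<and> generate G S = carrier G)"

definition torsion_free :: "('g, 'b) monoid_scheme \<Rightarrow> bool" where
  "torsion_free G \<longleftrightarrow> (\<forall>x \<in> carrier G. \<forall>k::nat. k > 0 \<and> x [^]\<^bsub>G\<^esub> k = \<one>\<^bsub>G\<^esub> \<longrightarrow> x = \<one>\<^bsub>G\<^esub>)"

definition two_step_nilpotent :: "('g, 'b) monoid_scheme \<Rightarrow> bool" where
  "two_step_nilpotent G \<longleftrightarrow> derived G (carrier G) \<subseteq> grp_center G"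

definition c_small :: "('g, 'b) monoid_scheme \<Rightarrow> 'g \<Rightarrow> bool" where
  "c_small G g \<longleftrightarrow> grp_centralizer G g =
     {g [^]\<^bsub>G\<^esub> (t::int) \<otimes>\<^bsub>G\<^esub> z | t z. z \<in> grp_center G}"

definition oprod :: "('g, 'b) monoid_scheme \<Rightarrow> (nat \<Rightarrow> 'g) \<Rightarrow> nat \<Rightarrow> nat \<Rightarrow> 'g" where
  "oprod G f i j = foldr (\<lambda>k acc. f k \<otimes>\<^bsub>G\<^esub> acc) [i..<j] \<one>\<^bsub>G\<^esub>"

definition aprod :: "('g, 'b) monoid_scheme \<Rightarrow> (nat \<Rightarrow> 'g) \<Rightarrow> nat \<Rightarrow> (nat \<Rightarrow> int) \<Rightarrow> 'g" where
  "aprod G a n e = oprod G (\<lambda>i. a i [^]\<^bsub>G\<^esub> e i) 1 (n + 1)"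

text \<open>Malcev basis (A;C) = (a_1..a_n; c_1..c_m):
  C is a basis of a free abelian subgroup (the c_j commute, being central, and
  c_1^{g_1}...c_m^{g_m} = 1 only for g = 0 on 1..m), G' <= <C> <= Z(G), and
  G/<C> is free abelian with basis {a_i <C>}: every coset is uniquely
  (a_1<C>)^{e_1}...(a_n<C>)^{e_n}.\<close>
definition malcev_basis ::
  "('g, 'b) monoid_scheme \<Rightarrow> nat \<Rightarrow> nat \<Rightarrow> (nat \<Rightarrow> 'g) \<Rightarrow> (nat \<Rightarrow> 'g) \<Rightarrow> bool" where
  "malcev_basis G n m a c \<longleftrightarrow>
     (\<forall>i \<in> {1..n}. a i \<in> carrier G) \<and>
     (\<forall>j \<in> {1..m}. c j \<in> carrier G) \<and>
     (\<forall>g::nat \<Rightarrow> int. aprod G c m g = \<one>\<^bsub>G\<^esub> \<longrightarrow> (\<forall>j \<in> {1..m}. g j = 0)) \<and>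
     derived G (carrier G) \<subseteq> generate G (c ` {1..m}) \<and>
     generate G (c ` {1..m}) \<subseteq> grp_center G \<and>
     (\<forall>x \<in> carrier G. \<exists>e::nat \<Rightarrow> int. x \<in> aprod G a n e <#\<^bsub>G\<^esub> generate G (c ` {1..m})) \<and>
     (\<forall>e e'. aprod G a n e <#\<^bsub>G\<^esub> generate G (c ` {1..m}) =
             aprod G a n e' <#\<^bsub>G\<^esub> generate G (c ` {1..m})
           \<longrightarrow> (\<forall>i \<in> {1..n}. e i = e' i))"

definition alpha_coord ::
  "('g, 'b) monoid_scheme \<Rightarrow> nat \<Rightarrow> nat \<Rightarrow> (nat \<Rightarrow> 'g) \<Rightarrow> (nat \<Rightarrow> 'g) \<Rightarrow> 'g \<Rightarrow> nat \<Rightarrow> int" where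
  "alpha_coord G n m a c x i =
     (THE k. \<exists>e g. x = aprod G a n e \<otimes>\<^bsub>G\<^esub> aprod G c m g \<and> e i = k)"

definition gamma_coord ::
  "('g, 'b) monoid_scheme \<Rightarrow> nat \<Rightarrow> nat \<Rightarrow> (nat \<Rightarrow> 'g) \<Rightarrow> (nat \<Rightarrow> 'g) \<Rightarrow> 'g \<Rightarrow> nat \<Rightarrow> int" where
  "gamma_coord G n m a c x j =
     (THE k. \<exists>e g. x = aprod G a n e \<otimes>\<^bsub>G\<^esub> aprod G c m g \<and> g j = k)"

definition c_part ::
  "('g, 'b) monoid_scheme \<Rightarrow> nat \<Rightarrow> nat \<Rightarrow> (nat \<Rightarrow> 'g) \<Rightarrow> (nat \<Rightarrow> 'g) \<Rightarrow> 'g \<Rightarrow> 'g" where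
  "c_part G n m a c x = aprod G c m (gamma_coord G n m a c x)"

definition lam ::
  "('g, 'b) monoid_scheme \<Rightarrow> nat \<Rightarrow> nat \<Rightarrow> (nat \<Rightarrow> 'g) \<Rightarrow> (nat \<Rightarrow> 'g) \<Rightarrow> nat \<Rightarrow> nat \<Rightarrow> nat \<Rightarrow> int" where
  "lam G n m a c t i j = (THE k. \<exists>g. comm G (a i) (a j) = aprod G c m g \<and> g t = k)"

definition M_entry ::
  "('g, 'b) monoid_scheme \<Rightarrow> nat \<Rightarrow> nat \<Rightarrow> (nat \<Rightarrow> 'g) \<Rightarrow> (nat \<Rightarrow> 'g) \<Rightarrow> nat \<Rightarrow> nat \<Rightarrow> nat \<Rightarrow> int" where
  "M_entry G n m a c l t k =
     (if k < l then - lam G n m a c t k l else lam G n m a c t l (k + 1))"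

definition rows_indep :: "(nat \<Rightarrow> nat \<Rightarrow> int) \<Rightarrow> nat \<Rightarrow> nat set \<Rightarrow> bool" where
  "rows_indep M p S \<longleftrightarrow>
     (\<forall>q::nat \<Rightarrow> rat. (\<forall>k \<in> {1..p}. (\<Sum>t \<in> S. q t * of_int (M t k)) = 0)
        \<longrightarrow> (\<forall>t \<in> S. q t = 0))"

definition row_rank :: "(nat \<Rightarrow> nat \<Rightarrow> int) \<Rightarrow> nat \<Rightarrow> nat \<Rightarrow> nat" where
  "row_rank M m p = Max {card S | S. S \<subseteq> {1..m} \<and> rows_indep M p S}"

definition rank_M ::
  "('g, 'b) monoid_scheme \<Rightarrow> nat \<Rightarrow> nat \<Rightarrow> (nat \<Rightarrow> 'g) \<Rightarrow> (nat \<Rightarrow> 'g) \<Rightarrow> nat \<Rightarrow> nat" where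
  "rank_M G n m a c l = row_rank (M_entry G n m a c l) m (n - 1)"

end

theory Submission
  imports Defs "HOL-Library.Function_Algebras"
begin


interpretation fv: vector_space "\<lambda>(r::rat) (f::nat\<Rightarrow>rat). (\<lambda>k. r * f k)"
  by unfold_locales (auto simp: fun_eq_iff algebra_simps)

lemma sum_fun_apply: "finite A \<Longrightarrow> (sum f A) x = (\<Sum>a\<in>A. f a x)"
  by (induction A rule: finite_induct) auto

lemma rank_kernel:
  fixes M :: "nat \<Rightarrow> nat \<Rightarrow> int" and \<beta> :: "nat \<Rightarrow> int"
  assumes rk: "row_rank M m p = p"
    and ker: "\<forall>t\<in>{1..m}. (\<Sum>k\<in>{1..p}. M t k * \<beta> k) = 0"
  shows "\<forall>k\<in>{1..p}. \<beta> k = 0"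
proof (rule ccontr)
  assume "\<not> ?thesis"
  then obtain k0 where k0: "k0 \<in> {1..p}" "\<beta> k0 \<noteq> 0" by auto
  let ?R = "{card S |S. S \<subseteq> {1..m} \<and> rows_indep M p S}"
  have fin: "finite ?R" by (rule finite_subset[of _ "card ` Pow {1..m}"]) auto
  have "card {} \<in> ?R" unfolding rows_indep_def by force
  hence ne: "?R \<noteq> {}" by blast
  have "Max ?R \<in> ?R" using Max_in[OF fin ne] .
  then obtain S where S: "S \<subseteq> {1..m}" "rows_indep M p S" "card S = p"
    using rk unfolding row_rank_def by auto
  have finS: "finite S" using S(1) finite_subset by blast
  define v where "v = (\<lambda>t::nat. \<lambda>k::nat. if k \<in> {1..p} then (of_int (M t k) :: rat) else 0)"
  define w where "w = (\<lambda>k::nat. if k \<in> {1..p} then (of_int (\<beta> k) :: rat) else 0)"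
  define dlt where "dlt = (\<lambda>k::nat. \<lambda>j::nat. if j = k then (1::rat) else 0)"
  define dot where "dot = (\<lambda>f g::nat\<Rightarrow>rat. \<Sum>k\<in>{1..p}. f k * g k)"
  have vw: "dot (v t) w = 0" if "t \<in> S" for t
  proof -
    have h: "rat_of_int (\<Sum>k\<in>{1..p}. M t k * \<beta> k) = 0" using ker S(1) that by (simp only: of_int_eq_0_iff) auto
    have "dot (v t) w = rat_of_int (\<Sum>k\<in>{1..p}. M t k * \<beta> k)"
      unfolding dot_def v_def w_def of_int_sum of_int_mult by simp
    then show ?thesis using h by simp
  qed
  have ww: "dot w w \<noteq> 0"
  proof -
    have "dot w w = (\<Sum>k\<in>{1..p}. (of_int (\<beta> k))^2)"
      unfolding dot_def w_def by (simp add: power2_eq_square)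
    moreover have "(\<Sum>k\<in>{1..p}. (of_int (\<beta> k) :: rat)^2) > 0"
      by (rule sum_pos2[OF _ k0(1)]) (use k0 in auto)
    ultimately show ?thesis by simp
  qed
  have injv: "inj_on v S"
  proof (rule inj_onI, rule ccontr)
    fix s s' assume ss: "s \<in> S" "s' \<in> S" "v s = v s'" "s \<noteq> s'"
    define q where "q = (\<lambda>t. if t = s then (1::rat) else if t = s' then -1 else 0)"
    have "(\<Sum>t\<in>S. q t * of_int (M t k)) = 0" if "k \<in> {1..p}" for k
    proof -
      have "(\<Sum>t\<in>S. q t * of_int (M t k)) = (\<Sum>t\<in>{s,s'}. q t * of_int (M t k))"
        by (rule sum.mono_neutral_right) (use finS ss in \<open>auto simp: q_def\<close>)
      also have "\<dots> = of_int (M s k) - of_int (M s' k)" using ss by (simp add: q_def)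
      also have "\<dots> = 0" using fun_cong[OF ss(3), of k] that by (simp add: v_def)
      finally show ?thesis .
    qed
    hence "q s = 0" using S(2) ss unfolding rows_indep_def by blast
    thus False by (simp add: q_def)
  qed
  have wnot: "w \<notin> v ` S" using vw ww by auto
  define Xs where "Xs = insert w (v ` S)"
  have cardX: "card Xs = Suc p" unfolding Xs_def using wnot finS injv S(3)
    by (simp add: card_image)
  have spT: "Xs \<subseteq> fv.span (dlt ` {1..p})"
  proof -
    have "f \<in> fv.span (dlt ` {1..p})" if "\<forall>k. k \<notin> {1..p} \<longrightarrow> f k = 0" for f
    proof -
      have "f = (\<Sum>k\<in>{1..p}. (\<lambda>j. f k * dlt k j))"
      proof (rule ext)
        fix x
        have "(\<Sum>k\<in>{1..p}. (\<lambda>j. f k * dlt k j)) x = (\<Sum>k\<in>{1..p}. f k * (if x = k then 1 else 0))"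
          by (simp add: sum_fun_apply dlt_def)
        also have "\<dots> = (if x \<in> {1..p} then f x else 0)"
          by (simp add: if_distrib[of "\<lambda>u. f _ * u"] sum.delta cong: if_cong)
        also have "\<dots> = f x" using that by auto
        finally show "f x = (\<Sum>k\<in>{1..p}. (\<lambda>j. f k * dlt k j)) x" by simp
      qed
      also have "\<dots> \<in> fv.span (dlt ` {1..p})"
        by (intro fv.span_sum fv.span_scale fv.span_base) auto
      finally show ?thesis .
    qed
    thus ?thesis unfolding Xs_def v_def w_def by auto
  qed
  have indX: "fv.independent Xs"
  proof (rule fv.independent_if_scalars_zero)
    show fXs: "finite Xs" unfolding Xs_def using finS by auto
    fix cf x assume sum0: "(\<Sum>v\<in>Xs. (\<lambda>k. cf v * v k)) = 0" and xX: "x \<in> Xs"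
    have pt: "cf w * w k + (\<Sum>s\<in>S. cf (v s) * v s k) = 0" for k
    proof -
      have "0 = (\<Sum>v\<in>Xs. (\<lambda>k. cf v * v k)) k" using sum0 by simp
      also have "\<dots> = (\<Sum>u\<in>Xs. cf u * u k)" using fXs by (simp add: sum_fun_apply)
      also have "\<dots> = cf w * w k + (\<Sum>u\<in>v ` S. cf u * u k)"
        unfolding Xs_def using wnot finS by simp
      also have "\<dots> = cf w * w k + (\<Sum>s\<in>S. cf (v s) * v s k)"
        by (simp add: sum.reindex[OF injv])
      finally show ?thesis by simp
    qed
    have "0 = (\<Sum>k\<in>{1..p}. (cf w * w k + (\<Sum>s\<in>S. cf (v s) * v s k)) * w k)"
      using pt by simp
    also have "\<dots> = cf w * dot w w + (\<Sum>s\<in>S. cf (v s) * dot (v s) w)"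
      unfolding dot_def
      by (simp add: algebra_simps sum.distrib sum_distrib_left sum_distrib_right sum.swap[of _ S])
    also have "\<dots> = cf w * dot w w" using vw by simp
    finally have cw: "cf w = 0" using ww by simp
    have "\<forall>t\<in>S. cf (v t) = 0"
      using S(2) unfolding rows_indep_def
    proof (elim allE impE)
      show "\<forall>k\<in>{1..p}. (\<Sum>t\<in>S. cf (v t) * of_int (M t k)) = 0"
      proof
        fix k assume kp: "k \<in> {1..p}"
        have "(\<Sum>s\<in>S. cf (v s) * v s k) = 0" using pt[of k] cw by simp
        moreover have "v s k = of_int (M s k)" for s using kp by (simp add: v_def)
        ultimately show "(\<Sum>t\<in>S. cf (v t) * of_int (M t k)) = 0" by simp
      qed
    qed
    then show "cf x = 0" using xX cw unfolding Xs_def by auto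
  qed
  have "card Xs \<le> card (dlt ` {1..p})"
    using fv.independent_span_bound[OF _ indX spT] by simp
  also have "\<dots> \<le> p" using card_image_le[of "{1..p}" dlt] by simp
  finally show False using cardX by simp
qed



locale tsn = group G for G (structure) +
  assumes der: "derived G (carrier G) \<subseteq> grp_center G"
begin

lemma center_carrier: "z \<in> grp_center G \<Longrightarrow> z \<in> carrier G"
  by (simp add: grp_center_def)

lemma center_comm: "z \<in> grp_center G \<Longrightarrow> y \<in> carrier G \<Longrightarrow> z \<otimes> y = y \<otimes> z"
  by (simp add: grp_center_def)

lemma comm_closed[simp]: "g \<in> carrier G \<Longrightarrow> h \<in> carrier G \<Longrightarrow> comm G g h \<in> carrier G"
  by (simp add: comm_def)

lemma comm_center: assumes g: "g \<in> carrier G" and h: "h \<in> carrier G"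
  shows "comm G g h \<in> grp_center G"
proof -
  have "comm G g h = inv g \<otimes> inv h \<otimes> inv (inv g) \<otimes> inv (inv h)"
    using g h by (simp add: comm_def)
  moreover have "inv g \<otimes> inv h \<otimes> inv (inv g) \<otimes> inv (inv h) \<in> derived G (carrier G)"
    unfolding derived_def by (rule generate.incl) (use g h in blast)
  ultimately show ?thesis using der by auto
qed

lemma comm_one_iff: assumes g: "g \<in> carrier G" and h: "h \<in> carrier G"
  shows "comm G g h = \<one> \<longleftrightarrow> g \<otimes> h = h \<otimes> g"
proof -
  have e: "comm G g h = inv (h \<otimes> g) \<otimes> (g \<otimes> h)"
    using g h by (simp add: comm_def inv_mult_group m_assoc)
  show ?thesis unfolding e using g h
    by (metis inv_closed inv_inv inv_equality m_closed r_inv)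
qed

lemma conj_eq: assumes g: "g \<in> carrier G" and x: "x \<in> carrier G"
  shows "inv x \<otimes> g \<otimes> x = g \<otimes> comm G g x"
  using g x by (simp add: comm_def m_assoc[symmetric] r_inv)

lemma comm_mult: assumes g: "g \<in> carrier G" and x: "x \<in> carrier G" and y: "y \<in> carrier G"
  shows "comm G g (x \<otimes> y) = comm G g x \<otimes> comm G g y"
proof -
  have "comm G g (x \<otimes> y) = inv g \<otimes> inv y \<otimes> (inv x \<otimes> g \<otimes> x) \<otimes> y"
    using g x y by (simp add: comm_def inv_mult_group m_assoc)
  also have "\<dots> = inv g \<otimes> inv y \<otimes> (g \<otimes> comm G g x) \<otimes> y"
    using g x y by (simp add: conj_eq)
  also have "\<dots> = inv g \<otimes> inv y \<otimes> g \<otimes> (comm G g x \<otimes> y)"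
    using g x y by (simp add: m_assoc)
  also have "\<dots> = inv g \<otimes> inv y \<otimes> g \<otimes> (y \<otimes> comm G g x)"
    using g x y center_comm[OF comm_center[OF g x], of y] by simp
  also have "\<dots> = comm G g y \<otimes> comm G g x"
    using g x y by (simp add: comm_def m_assoc)
  also have "\<dots> = comm G g x \<otimes> comm G g y"
    using center_comm[OF comm_center[OF g y], of "comm G g x"] g x y by simp
  finally show ?thesis .
qed

lemma comm_one_right: "g \<in> carrier G \<Longrightarrow> comm G g \<one> = \<one>"
  by (simp add: comm_def)

lemma comm_inv: assumes g: "g \<in> carrier G" and x: "x \<in> carrier G"
  shows "comm G g (inv x) = inv (comm G g x)"
proof -
  have "comm G g x \<otimes> comm G g (inv x) = \<one>"
    using comm_mult[OF g x inv_closed[OF x]] g x by (simp add: comm_one_right)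
  hence "comm G g (inv x) \<otimes> comm G g x = \<one>" using g x inv_comm by simp
  thus ?thesis using g x by (simp add: inv_equality)
qed

lemma comm_pow_nat: assumes g: "g \<in> carrier G" and x: "x \<in> carrier G"
  shows "comm G g (x [^] (k::nat)) = comm G g x [^] k"
  by (induction k) (simp_all add: g x comm_one_right comm_mult)

lemma comm_pow: assumes g: "g \<in> carrier G" and x: "x \<in> carrier G"
  shows "comm G g (x [^] (k::int)) = comm G g x [^] k"
proof (cases k rule: int_cases)
  case (nonneg n) then show ?thesis using comm_pow_nat[OF g x] by (simp add: int_pow_int)
next
  case (neg n)
  have h1: "x [^] k = inv (x [^] Suc n)" using neg x int_pow_neg_int[OF x, of "Suc n"] by (simp del: nat_pow_Suc)
  have h2: "comm G g x [^] k = inv (comm G g x [^] Suc n)"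
    using neg int_pow_neg_int[of "comm G g x" "Suc n"] g x by (simp del: nat_pow_Suc)
  show ?thesis by (simp only: h1 h2 comm_inv[OF g nat_pow_closed[OF x]] comm_pow_nat[OF g x])
qed

lemma comm_central: "g \<in> carrier G \<Longrightarrow> z \<in> grp_center G \<Longrightarrow> comm G g z = \<one>"
  using comm_one_iff center_comm center_carrier by metis

lemma comm_self: "g \<in> carrier G \<Longrightarrow> comm G g g = \<one>"
  using comm_one_iff by simp

lemma comm_swap: assumes g: "g \<in> carrier G" and h: "h \<in> carrier G"
  shows "comm G h g = inv (comm G g h)"
proof -
  have "comm G h g \<otimes> comm G g h = \<one>"
    using g h by (simp add: comm_def m_assoc[symmetric]) (simp add: m_assoc r_inv)
  thus ?thesis using g h by (simp add: inv_equality)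
qed

end


context group begin

lemma foldr_split:
  assumes "\<forall>k\<in>set xs. f k \<in> carrier G" "y \<in> carrier G"
  shows "foldr (\<lambda>k acc. f k \<otimes> acc) xs y = foldr (\<lambda>k acc. f k \<otimes> acc) xs \<one> \<otimes> y
     \<and> foldr (\<lambda>k acc. f k \<otimes> acc) xs \<one> \<in> carrier G"
  using assms by (induction xs) (auto simp: m_assoc)

lemma aprod_0[simp]: "aprod G a 0 e = \<one>"
  by (simp add: aprod_def oprod_def)

lemma aprod_Suc:
  assumes "\<forall>i\<in>{1..Suc n}. a i \<in> carrier G"
  shows "aprod G a (Suc n) e = aprod G a n e \<otimes> a (Suc n) [^] e (Suc n)"
proof -
  have "[1..<Suc n + 1] = [1..<n+1] @ [Suc n]" by simp
  hence "aprod G a (Suc n) e = foldr (\<lambda>k acc. a k [^] e k \<otimes> acc) [1..<n+1] (a (Suc n) [^] e (Suc n) \<otimes> \<one>)"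
    unfolding aprod_def oprod_def by simp
  also have "\<dots> = aprod G a n e \<otimes> a (Suc n) [^] e (Suc n)"
    unfolding aprod_def oprod_def
    by (subst foldr_split[THEN conjunct1]) (use assms in auto)
  finally show ?thesis .
qed

lemma aprod_closed:
  "\<forall>i\<in>{1..n}. a i \<in> carrier G \<Longrightarrow> aprod G a n e \<in> carrier G"
  by (induction n) (auto simp: aprod_Suc)

lemma aprod_cong:
  "\<forall>i\<in>{1..n}. e i = e' i \<Longrightarrow> aprod G a n e = aprod G a n e'"
  unfolding aprod_def oprod_def by (rule foldr_cong) auto

lemma aprod_zero:
  "\<forall>i\<in>{1..n}. a i \<in> carrier G \<Longrightarrow> aprod G a n (\<lambda>_. 0) = \<one>"
  by (induction n) (auto simp: aprod_Suc)

lemma aprod_single: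
  assumes "\<forall>i\<in>{1..n}. a i \<in> carrier G"
  shows "aprod G a n (\<lambda>j. if j = i0 then k else 0) = (if i0 \<in> {1..n} then a i0 [^] k else \<one>)"
  using assms
proof (induction n)
  case 0 then show ?case by simp
next
  case (Suc n)
  have IH: "aprod G a n (\<lambda>j. if j = i0 then k else 0) = (if i0 \<in> {1..n} then a i0 [^] k else \<one>)"
    using Suc by auto
  show ?case
    using Suc.prems IH by (auto simp: aprod_Suc)
qed

end



locale malc = tsn +
  fixes n m :: nat and a c :: "nat \<Rightarrow> 'a"
  assumes mb: "malcev_basis G n m a c"
begin

abbreviation "H \<equiv> generate G (c ` {1..m})"

lemma a_car: "\<forall>i\<in>{1..n}. a i \<in> carrier G" using mb by (simp add: malcev_basis_def)
lemma c_car: "\<forall>j\<in>{1..m}. c j \<in> carrier G" using mb by (simp add: malcev_basis_def)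
lemma c_indep: "aprod G c m g = \<one> \<Longrightarrow> \<forall>j\<in>{1..m}. g j = 0" using mb by (simp add: malcev_basis_def)
lemma der_H: "derived G (carrier G) \<subseteq> H" using mb by (simp add: malcev_basis_def)
lemma H_center: "H \<subseteq> grp_center G" using mb by (simp add: malcev_basis_def)
lemma cover: "x \<in> carrier G \<Longrightarrow> \<exists>e. x \<in> aprod G a n e <# H" using mb by (simp add: malcev_basis_def)
lemma coset_uniq: "aprod G a n e <# H = aprod G a n e' <# H \<Longrightarrow> \<forall>i\<in>{1..n}. e i = e' i"
  using mb by (simp add: malcev_basis_def)

lemma H_sub: "subgroup H G"
  by (rule generate_is_subgroup) (use c_car in auto)

lemma c_cent: "j \<in> {1..m} \<Longrightarrow> c j \<in> grp_center G"
  using H_center generate.incl[of "c j" "c ` {1..m}" G] by auto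

lemma aprodc_H: "k \<le> m \<Longrightarrow> aprod G c k g \<in> H"
proof (induction k)
  case 0 then show ?case by (simp add: generate.one)
next
  case (Suc k)
  have "c (Suc k) [^] g (Suc k) \<in> H"
    using subgroup_int_pow_closed[OF H_sub] generate.incl[of "c (Suc k)" "c ` {1..m}" G] Suc.prems by auto
  then show ?case using Suc c_car by (auto simp: aprod_Suc intro!: generate.eng)
qed

lemma aprodc_cent: "aprod G c m g \<in> grp_center G"
  using aprodc_H H_center by auto

lemma aprodc_car: "aprod G c m g \<in> carrier G"
  using aprodc_cent center_carrier by auto

lemma aprodc_add: "k \<le> m \<Longrightarrow> aprod G c k (\<lambda>j. f j + g j) = aprod G c k f \<otimes> aprod G c k g"
proof (induction k)
  case 0 then show ?case by simp
next
  case (Suc k)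
  have car: "\<forall>i\<in>{1..Suc k}. c i \<in> carrier G" using c_car Suc.prems by auto
  have ck: "c (Suc k) \<in> carrier G" using car by auto
  have Ak: "aprod G c k g \<in> grp_center G" using aprodc_H[of k g] H_center Suc.prems by auto
  have Af: "aprod G c k f \<in> carrier G" using aprod_closed car by auto
  have Ag: "aprod G c k g \<in> carrier G" using Ak center_carrier by auto
  have "aprod G c (Suc k) (\<lambda>j. f j + g j) =
      aprod G c k f \<otimes> aprod G c k g \<otimes> (c (Suc k) [^] f (Suc k) \<otimes> c (Suc k) [^] g (Suc k))"
    using Suc car ck by (simp add: aprod_Suc int_pow_mult)
  also have "\<dots> = aprod G c k f \<otimes> (aprod G c k g \<otimes> c (Suc k) [^] f (Suc k)) \<otimes> c (Suc k) [^] g (Suc k)"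
    using Af Ag ck by (simp add: m_assoc)
  also have "\<dots> = aprod G c k f \<otimes> (c (Suc k) [^] f (Suc k) \<otimes> aprod G c k g) \<otimes> c (Suc k) [^] g (Suc k)"
    using center_comm[OF Ak, of "c (Suc k) [^] f (Suc k)"] ck by simp
  also have "\<dots> = aprod G c (Suc k) f \<otimes> aprod G c (Suc k) g"
    using Af Ag ck car by (simp add: aprod_Suc m_assoc)
  finally show ?case .
qed

lemma aprodc_zero: "aprod G c m (\<lambda>_. 0) = \<one>"
  using aprod_zero c_car by auto

lemma aprodc_neg: "aprod G c m (\<lambda>j. - f j) = inv (aprod G c m f)"
proof -
  have "aprod G c m (\<lambda>j. - f j) \<otimes> aprod G c m f = \<one>"
    using aprodc_add[of m "\<lambda>j. - f j" f] aprodc_zero by simp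
  thus ?thesis using aprodc_car by (simp add: inv_equality)
qed

lemma aprodc_smul_nat: "aprod G c m (\<lambda>j. int k * f j) = aprod G c m f [^] int k"
proof (induction k)
  case 0 then show ?case using aprodc_zero by simp
next
  case (Suc k)
  have "aprod G c m (\<lambda>j. int (Suc k) * f j) = aprod G c m (\<lambda>j. f j + int k * f j)"
    by (simp add: algebra_simps)
  also have "\<dots> = aprod G c m f \<otimes> aprod G c m f [^] int k" using aprodc_add Suc by simp
  also have "\<dots> = aprod G c m f [^] (1 + int k)" using aprodc_car by (simp add: int_pow_mult)
  finally show ?case by simp
qed

lemma aprodc_smul: "aprod G c m (\<lambda>j. k * f j) = aprod G c m f [^] k"
proof (cases k rule: int_cases)
  case (nonneg n) then show ?thesis using aprodc_smul_nat by simp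
next
  case (neg n)
  have "aprod G c m (\<lambda>j. k * f j) = aprod G c m (\<lambda>j. - (int (Suc n) * f j))"
    using neg by (simp add: left_diff_distrib distrib_right)
  also have "\<dots> = inv (aprod G c m f [^] int (Suc n))"
    using aprodc_neg aprodc_smul_nat[of "Suc n" f] by (simp del: of_nat_Suc)
  also have "\<dots> = aprod G c m f [^] k"
    using neg aprodc_car int_pow_neg[of "aprod G c m f" "int (Suc n)"] by simp
  finally show ?thesis .
qed

lemma aprodc_inj: assumes "aprod G c m f = aprod G c m g" shows "\<forall>j\<in>{1..m}. f j = g j"
proof -
  have "aprod G c m (\<lambda>j. f j + - g j) = \<one>"
    using aprodc_add[of m f "\<lambda>j. - g j"] aprodc_neg assms aprodc_car by simp
  thus ?thesis using c_indep by fastforce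
qed

lemma H_range: "h \<in> H \<Longrightarrow> \<exists>g. h = aprod G c m g"
proof (induction rule: generate.induct)
  case one then show ?case using aprodc_zero by metis
next
  case (incl h)
  then obtain j where j: "j \<in> {1..m}" "h = c j" by auto
  show ?case using aprod_single[OF c_car, of j 1] j c_car by (metis int_pow_1)
next
  case (inv h)
  then obtain j where j: "j \<in> {1..m}" "h = c j" by auto
  have "inv h = aprod G c m (\<lambda>i. - (if i = j then 1 else 0))"
    using aprodc_neg aprod_single[OF c_car, of j 1] j c_car by auto
  then show ?case by blast
next
  case (eng h1 h2)
  then obtain g1 g2 where "h1 = aprod G c m g1" "h2 = aprod G c m g2" by blast
  then show ?case using aprodc_add[of m g1 g2] by (intro exI[of _ "\<lambda>j. g1 j + g2 j"]) simp
qed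

end


context malc begin

lemma rep: "x \<in> carrier G \<Longrightarrow> \<exists>e g. x = aprod G a n e \<otimes> aprod G c m g"
proof -
  assume "x \<in> carrier G"
  then obtain e where "x \<in> aprod G a n e <# H" using cover by blast
  then obtain h where "h \<in> H" "x = aprod G a n e \<otimes> h" unfolding l_coset_def by auto
  then show ?thesis using H_range by blast
qed

lemma uniq:
  assumes eq: "aprod G a n e \<otimes> aprod G c m g = aprod G a n e' \<otimes> aprod G c m g'"
  shows "(\<forall>i\<in>{1..n}. e i = e' i) \<and> (\<forall>j\<in>{1..m}. g j = g' j)"
proof -
  let ?A = "aprod G a n e" and ?B = "aprod G a n e'"
  let ?hA = "aprod G c m g" and ?hB = "aprod G c m g'"
  have A: "?A \<in> carrier G" and B: "?B \<in> carrier G" using aprod_closed a_car by auto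
  have hA: "?hA \<in> carrier G" and hB: "?hB \<in> carrier G" using aprodc_car by auto
  define d where "d = ?hB \<otimes> inv ?hA"
  have dH: "d \<in> H" unfolding d_def using aprodc_H[of m] H_sub
    by (simp add: subgroup.m_closed subgroup.m_inv_closed)
  have dc: "d \<in> carrier G" unfolding d_def using hA hB by simp
  have Ad: "?A = ?B \<otimes> d"
  proof -
    have "?A = ?A \<otimes> ?hA \<otimes> inv ?hA" using A hA by (simp add: m_assoc)
    also have "\<dots> = ?B \<otimes> d" unfolding d_def using eq B hA hB by (simp add: m_assoc)
    finally show ?thesis .
  qed
  have Hc: "H \<subseteq> carrier G" using H_sub subgroup.subset by blast
  have "?A <# H = ?B <# H"
  proof
    show "?A <# H \<subseteq> ?B <# H"
    proof
      fix y assume "y \<in> ?A <# H"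
      then obtain k where k: "k \<in> H" "y = ?A \<otimes> k" unfolding l_coset_def by auto
      have "y = ?B \<otimes> (d \<otimes> k)" using k Ad B dc Hc by (auto simp: m_assoc)
      moreover have "d \<otimes> k \<in> H" using dH k H_sub by (simp add: subgroup.m_closed)
      ultimately show "y \<in> ?B <# H" unfolding l_coset_def by auto
    qed
  next
    show "?B <# H \<subseteq> ?A <# H"
    proof
      fix y assume "y \<in> ?B <# H"
      then obtain k where k: "k \<in> H" "y = ?B \<otimes> k" unfolding l_coset_def by auto
      have kc: "k \<in> carrier G" using k Hc by auto
      have "?A \<otimes> (inv d \<otimes> k) = ?B \<otimes> k" using Ad B dc kc by (simp add: m_assoc m_assoc[symmetric, of d "inv d" k] r_inv)
      hence "y = ?A \<otimes> (inv d \<otimes> k)" using k by simp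
      moreover have "inv d \<otimes> k \<in> H" using dH k H_sub by (simp add: subgroup.m_closed subgroup.m_inv_closed)
      ultimately show "y \<in> ?A <# H" unfolding l_coset_def by auto
    qed
  qed
  hence ee: "\<forall>i\<in>{1..n}. e i = e' i" by (rule coset_uniq)
  hence "?A = ?B" by (rule aprod_cong)
  hence "?hA = ?hB" using eq A hA hB by simp
  thus ?thesis using ee aprodc_inj by blast
qed

lemma alpha_val:
  assumes "x = aprod G a n e \<otimes> aprod G c m g" "i \<in> {1..n}"
  shows "alpha_coord G n m a c x i = e i"
  unfolding alpha_coord_def
proof (rule the_equality)
  show "\<exists>e' g'. x = aprod G a n e' \<otimes> aprod G c m g' \<and> e' i = e i" using assms by blast
next
  fix k assume "\<exists>e' g'. x = aprod G a n e' \<otimes> aprod G c m g' \<and> e' i = k"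
  then obtain e' g' where "x = aprod G a n e' \<otimes> aprod G c m g'" "e' i = k" by blast
  then show "k = e i" using uniq[of e g e' g'] assms by auto
qed

lemma gamma_val:
  assumes "x = aprod G a n e \<otimes> aprod G c m g" "j \<in> {1..m}"
  shows "gamma_coord G n m a c x j = g j"
  unfolding gamma_coord_def
proof (rule the_equality)
  show "\<exists>e' g'. x = aprod G a n e' \<otimes> aprod G c m g' \<and> g' j = g j" using assms by blast
next
  fix k assume "\<exists>e' g'. x = aprod G a n e' \<otimes> aprod G c m g' \<and> g' j = k"
  then obtain e' g' where "x = aprod G a n e' \<otimes> aprod G c m g'" "g' j = k" by blast
  then show "k = g j" using uniq[of e g e' g'] assms by auto
qed

lemma cpart_val:
  assumes "x = aprod G a n e \<otimes> aprod G c m g"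
  shows "c_part G n m a c x = aprod G c m g"
  unfolding c_part_def using gamma_val[OF assms] by (intro aprod_cong) auto

lemma comm_in_H: "g \<in> carrier G \<Longrightarrow> h \<in> carrier G \<Longrightarrow> comm G g h \<in> H"
proof -
  assume g: "g \<in> carrier G" and h: "h \<in> carrier G"
  have "comm G g h = inv g \<otimes> inv h \<otimes> inv (inv g) \<otimes> inv (inv h)"
    using g h by (simp add: comm_def)
  moreover have "inv g \<otimes> inv h \<otimes> inv (inv g) \<otimes> inv (inv h) \<in> derived G (carrier G)"
    unfolding derived_def by (rule generate.incl) (use g h in blast)
  ultimately show ?thesis using der_H by auto
qed

lemma lam_spec:
  assumes "i \<in> {1..n}" "j \<in> {1..n}"
  shows "comm G (a i) (a j) = aprod G c m (\<lambda>t. lam G n m a c t i j)"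
proof -
  obtain g0 where g0: "comm G (a i) (a j) = aprod G c m g0"
    using H_range comm_in_H a_car assms by blast
  have "lam G n m a c t i j = g0 t" if t: "t \<in> {1..m}" for t
    unfolding lam_def
  proof (rule the_equality)
    show "\<exists>g. comm G (a i) (a j) = aprod G c m g \<and> g t = g0 t" using g0 by blast
  next
    fix k assume "\<exists>g. comm G (a i) (a j) = aprod G c m g \<and> g t = k"
    then obtain g where "comm G (a i) (a j) = aprod G c m g" "g t = k" by blast
    then show "k = g0 t" using aprodc_inj[of g g0] g0 t by auto
  qed
  then show ?thesis using g0 by (metis aprod_cong)
qed

lemma lam_anti:
  assumes "t \<in> {1..m}" "i \<in> {1..n}" "j \<in> {1..n}"
  shows "lam G n m a c t j i = - lam G n m a c t i j"
proof -
  have "aprod G c m (\<lambda>t. lam G n m a c t j i) = aprod G c m (\<lambda>t. - lam G n m a c t i j)"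
    using lam_spec[of j i] lam_spec[of i j] assms comm_swap[of "a i" "a j"] a_car aprodc_neg
    by simp
  thus ?thesis using aprodc_inj assms(1) by blast
qed

lemma lam_diag:
  assumes "t \<in> {1..m}" "i \<in> {1..n}"
  shows "lam G n m a c t i i = 0"
proof -
  have "aprod G c m (\<lambda>t. lam G n m a c t i i) = aprod G c m (\<lambda>_. 0)"
    using lam_spec[of i i] assms comm_self a_car aprodc_zero by simp
  thus ?thesis using aprodc_inj assms(1) by blast
qed

lemma comm_aprod:
  assumes l: "l \<in> {1..n}"
  shows "k \<le> n \<Longrightarrow> comm G (a l) (aprod G a k e) = aprod G c m (\<lambda>t. \<Sum>i\<in>{1..k}. e i * lam G n m a c t l i)"
proof (induction k)
  case 0 then show ?case using aprodc_zero comm_one_right a_car l by simp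
next
  case (Suc k)
  have car: "\<forall>i\<in>{1..Suc k}. a i \<in> carrier G" using a_car Suc.prems by auto
  have al: "a l \<in> carrier G" using a_car l by auto
  have "comm G (a l) (aprod G a (Suc k) e) = comm G (a l) (aprod G a k e) \<otimes> comm G (a l) (a (Suc k)) [^] e (Suc k)"
    using car al by (simp add: aprod_Suc comm_mult aprod_closed comm_pow)
  also have "\<dots> = aprod G c m (\<lambda>t. \<Sum>i\<in>{1..k}. e i * lam G n m a c t l i) \<otimes>
      aprod G c m (\<lambda>t. e (Suc k) * lam G n m a c t l (Suc k))"
    using Suc lam_spec[of l "Suc k"] l aprodc_smul by simp
  also have "\<dots> = aprod G c m (\<lambda>t. \<Sum>i\<in>{1..Suc k}. e i * lam G n m a c t l i)"
    using aprodc_add[of m "\<lambda>t. \<Sum>i\<in>{1..k}. e i * lam G n m a c t l i" "\<lambda>t. e (Suc k) * lam G n m a c t l (Suc k)"] by simp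
  finally show ?case .
qed

end


context malc begin

lemma h_image:
  assumes l: "l \<in> {1..n}"
  shows "(\<lambda>k. if k < l then k else Suc k) ` {1..n-1} = {1..n} - {l}"
proof
  show "(\<lambda>k. if k < l then k else Suc k) ` {1..n-1} \<subseteq> {1..n} - {l}" using l by auto
next
  show "{1..n} - {l} \<subseteq> (\<lambda>k. if k < l then k else Suc k) ` {1..n-1}"
  proof
    fix i assume i: "i \<in> {1..n} - {l}"
    show "i \<in> (\<lambda>k. if k < l then k else Suc k) ` {1..n-1}"
    proof (cases "i < l")
      case True then show ?thesis using i l by (intro image_eqI[of _ _ i]) auto
    next
      case False then show ?thesis using i l by (intro image_eqI[of _ _ "i - 1"]) auto
    qed
  qed
qed

lemma h_inj: "inj_on (\<lambda>k. if k < l then k else Suc k) {1..n-1}"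
  by (rule inj_onI) (auto split: if_splits)

lemma comm_pow_cent:
  assumes g: "g \<in> carrier G" and z: "z \<in> grp_center G" and x: "x \<in> carrier G"
  shows "comm G g (x [^] (k::int) \<otimes> z) = comm G g x [^] k"
  using comm_mult[OF g _ center_carrier[OF z], of "x [^] k"] comm_central[OF g z] comm_pow[OF g x] g x
  by simp

lemma main_fwd:
  assumes l: "l \<in> {1..n}" and rk: "rank_M G n m a c l = n - 1"
    and x: "x \<in> carrier G" and cx: "comm G (a l) x = \<one>"
  shows "x = a l [^] alpha_coord G n m a c x l \<otimes> c_part G n m a c x"
proof -
  obtain e g where xe: "x = aprod G a n e \<otimes> aprod G c m g" using rep x by blast
  have al: "a l \<in> carrier G" using a_car l by auto
  have "comm G (a l) x = comm G (a l) (aprod G a n e)"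
    using xe comm_mult[OF al aprod_closed[OF a_car] aprodc_car] comm_central[OF al aprodc_cent]
      al aprod_closed[OF a_car] by simp
  hence "aprod G c m (\<lambda>t. \<Sum>i\<in>{1..n}. e i * lam G n m a c t l i) = aprod G c m (\<lambda>_. 0)"
    using cx comm_aprod[OF l, of n e] aprodc_zero by simp
  hence S0: "\<forall>t\<in>{1..m}. (\<Sum>i\<in>{1..n}. e i * lam G n m a c t l i) = 0"
    using aprodc_inj by blast
  define h where "h = (\<lambda>k::nat. if k < l then k else Suc k)"
  define \<beta> where "\<beta> = (\<lambda>k. e (h k))"
  have ker: "\<forall>t\<in>{1..m}. (\<Sum>k\<in>{1..n-1}. M_entry G n m a c l t k * \<beta> k) = 0"
  proof
    fix t assume t: "t \<in> {1..m}"
    have Mk: "M_entry G n m a c l t k = lam G n m a c t l (h k)" if k: "k \<in> {1..n-1}" for k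
    proof (cases "k < l")
      case True
      then show ?thesis using lam_anti[OF t, of l k] l k by (simp add: M_entry_def h_def)
    next
      case False then show ?thesis by (simp add: M_entry_def h_def)
    qed
    have "(\<Sum>k\<in>{1..n-1}. M_entry G n m a c l t k * \<beta> k) = (\<Sum>k\<in>{1..n-1}. lam G n m a c t l (h k) * e (h k))"
      using Mk by (simp add: \<beta>_def)
    also have "\<dots> = (\<Sum>i\<in>h ` {1..n-1}. lam G n m a c t l i * e i)"
      using sum.reindex[OF h_inj[of l], of "\<lambda>i. lam G n m a c t l i * e i"] by (simp add: h_def)
    also have "\<dots> = (\<Sum>i\<in>{1..n} - {l}. lam G n m a c t l i * e i)"
      using h_image[OF l] by (simp add: h_def)
    also have "\<dots> = (\<Sum>i\<in>{1..n}. lam G n m a c t l i * e i) - lam G n m a c t l l * e l"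
      using l by (simp add: sum_diff1)
    also have "\<dots> = 0" using S0 t lam_diag[OF t l] by (simp add: mult.commute)
    finally show "(\<Sum>k\<in>{1..n-1}. M_entry G n m a c l t k * \<beta> k) = 0" .
  qed
  have b0: "\<forall>k\<in>{1..n-1}. \<beta> k = 0"
    using rank_kernel[of "M_entry G n m a c l" m "n-1" \<beta>] rk ker unfolding rank_M_def by blast
  have e0: "\<forall>i\<in>{1..n}. e i = (if i = l then e l else 0)"
  proof
    fix i assume i: "i \<in> {1..n}"
    show "e i = (if i = l then e l else 0)"
    proof (cases "i = l")
      case False
      then have "i \<in> h ` {1..n-1}" using h_image[OF l] i by (simp add: h_def)
      then obtain k where "k \<in> {1..n-1}" "i = h k" by blast
      then show ?thesis using b0 False by (simp add: \<beta>_def)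
    qed simp
  qed
  have "aprod G a n e = a l [^] e l"
    using aprod_cong[OF e0] aprod_single[OF a_car, of l "e l"] l by simp
  moreover have "alpha_coord G n m a c x l = e l" using alpha_val[OF xe l] .
  moreover have "c_part G n m a c x = aprod G c m g" using cpart_val[OF xe] .
  ultimately show ?thesis using xe by simp
qed

lemma cpart_cent: "c_part G n m a c x \<in> grp_center G"
  unfolding c_part_def using aprodc_cent .

lemma part1:
  assumes l: "l \<in> {1..n}" and rk: "rank_M G n m a c l = n - 1" and x: "x \<in> carrier G"
  shows "comm G (a l) x = \<one> \<longleftrightarrow> x = a l [^] alpha_coord G n m a c x l \<otimes> c_part G n m a c x"
proof
  assume "comm G (a l) x = \<one>" then show "x = a l [^] alpha_coord G n m a c x l \<otimes> c_part G n m a c x"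
    using main_fwd[OF l rk x] by simp
next
  assume xe: "x = a l [^] alpha_coord G n m a c x l \<otimes> c_part G n m a c x"
  have al: "a l \<in> carrier G" using a_car l by auto
  have "comm G (a l) (a l [^] alpha_coord G n m a c x l \<otimes> c_part G n m a c x) = \<one>"
    using comm_pow_cent[OF al cpart_cent al] comm_self[OF al] by simp
  then show "comm G (a l) x = \<one>" using xe by simp
qed

lemma part2:
  assumes l: "l \<in> {1..n}" and rk: "rank_M G n m a c l = n - 1"
    and t0: "t0 \<in> {1..m}" and k0: "k0 \<in> {1..n}" "k0 \<noteq> l" and nz: "lam G n m a c t0 l k0 \<noteq> 0"
  shows "grp_center G = H \<and> c_small G (a l)"
proof -
  have al: "a l \<in> carrier G" using a_car l by auto
  have ak: "a k0 \<in> carrier G" using a_car k0 by auto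
  have ZH: "grp_center G = H"
  proof
    show "H \<subseteq> grp_center G" by (rule H_center)
  next
    show "grp_center G \<subseteq> H"
    proof
      fix z assume z: "z \<in> grp_center G"
      have zc: "z \<in> carrier G" using z center_carrier by auto
      let ?\<alpha> = "alpha_coord G n m a c z l" and ?cp = "c_part G n m a c z"
      have ze: "z = a l [^] ?\<alpha> \<otimes> ?cp"
        using main_fwd[OF l rk zc comm_central[OF al z]] .
      have "comm G (a k0) z = comm G (a k0) (a l) [^] ?\<alpha>"
        using comm_pow_cent[OF ak cpart_cent al, of ?\<alpha> z] by (simp only: ze[symmetric])
      hence "aprod G c m (\<lambda>t. ?\<alpha> * lam G n m a c t k0 l) = aprod G c m (\<lambda>_. 0)"
        using comm_central[OF ak z] lam_spec[OF k0(1) l] aprodc_smul aprodc_zero by simp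
      hence "?\<alpha> * lam G n m a c t0 k0 l = 0" using aprodc_inj t0 by blast
      moreover have "lam G n m a c t0 k0 l \<noteq> 0" using lam_anti[OF t0 l k0(1)] nz by simp
      ultimately have "?\<alpha> = 0" by simp
      hence "z = ?cp" using ze cpart_cent center_carrier by simp
      moreover have "?cp \<in> H" unfolding c_part_def by (rule aprodc_H) simp
      ultimately show "z \<in> H" by simp
    qed
  qed
  have "c_small G (a l)"
    unfolding c_small_def grp_centralizer_def
  proof
    show "{y \<in> carrier G. a l \<otimes> y = y \<otimes> a l} \<subseteq> {a l [^] (t::int) \<otimes> z |t z. z \<in> grp_center G}"
    proof
      fix y assume "y \<in> {y \<in> carrier G. a l \<otimes> y = y \<otimes> a l}"
      hence y: "y \<in> carrier G" "a l \<otimes> y = y \<otimes> a l" by auto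
      have "comm G (a l) y = \<one>" using comm_one_iff[OF al y(1)] y by simp
      hence "y = a l [^] alpha_coord G n m a c y l \<otimes> c_part G n m a c y" using main_fwd[OF l rk y(1)] by simp
      thus "y \<in> {a l [^] (t::int) \<otimes> z |t z. z \<in> grp_center G}" using cpart_cent[of y]
        by blast
    qed
  next
    show "{a l [^] (t::int) \<otimes> z |t z. z \<in> grp_center G} \<subseteq> {y \<in> carrier G. a l \<otimes> y = y \<otimes> a l}"
    proof
      fix y assume "y \<in> {a l [^] (t::int) \<otimes> z |t z. z \<in> grp_center G}"
      then obtain t z where y: "y = a l [^] (t::int) \<otimes> z" "z \<in> grp_center G" by blast
      have yc: "y \<in> carrier G" using y al center_carrier by auto
      have "comm G (a l) y = \<one>" using comm_pow_cent[OF al y(2) al] comm_self[OF al] y by simp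
      thus "y \<in> {y \<in> carrier G. a l \<otimes> y = y \<otimes> a l}" using comm_one_iff[OF al yc] yc by simp
    qed
  qed
  with ZH show ?thesis by simp
qed

end

theorem proposition3p7:
  fixes G (structure) and n m :: nat and a c :: "nat \<Rightarrow> 'g" and l :: nat
  assumes "group G"
    and "finitely_generated G"
    and "torsion_free G"
    and "two_step_nilpotent G"
    and "malcev_basis G n m a c"
    and "n \<ge> 2" and "m \<ge> 1"
    and "l \<in> {1..n}"
    and "rank_M G n m a c l = n - 1"
  shows "(\<forall>x \<in> carrier G. comm G (a l) x = \<one> \<longleftrightarrow>
            x = a l [^] alpha_coord G n m a c x l \<otimes> c_part G n m a c x)
       \<and> ((\<exists>t \<in> {1..m}. \<exists>k \<in> {1..n}. k \<noteq> l \<and> lam G n m a c t l k \<noteq> 0)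
           \<longrightarrow> grp_center G = generate G (c ` {1..m}) \<and> c_small G (a l))"
proof -
  interpret M: malc G n m a c
    using assms unfolding malc_def malc_axioms_def tsn_def tsn_axioms_def two_step_nilpotent_def
    by auto
  show ?thesis using M.part1[OF assms(8,9)] M.part2[OF assms(8,9)] by blast
qed

end
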